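(* Let $R\ge0$ and $p>0$. Let $\mathcal G$ be a hypergraph and $\pi:V(\mathcal G)\to U$ a function satisfying $|\pi(E)|=|E|$ for every $E\in\mathcal G$. If $\pi(\mathcal G)$ is $(p,R)$-Janson, then $\mathcal G$ is $(p,R)$-Janson.
   Context: A hypergraph is identified with its edge set, a family of subsets of its vertex set. $\pi(\mathcal G)$ is the hypergraph with vertex set $\pi(V(\mathcal G))$ and edge set $\{\pi(E):E\in\mathcal G\}$. For $\nu:\mathcal G\to\mathbb R_{\ge0}$: $e(\nu)=\sum_{E\in\mathcal G}\nu(E)$, $d_\nu(L)=\sum_{E\in\mathcal G,L\subset E}\nu(E)$, $\Lambda_p(\nu)=\sum_{L\subset V(\mathcal G),|L|\ge2}d_\nu(L)^2p^{-|L|}$. For $R>0$, $\mathcal G$ is $(p,R)$-Janson if there is $\nu:\mathcal G\to\mathbb R_{\ge0}$ with $\Lambda_p(\nu)<e(\nu)^2/R$; for $R=0$ every hypergraph is $(p,R)$-Janson. *)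

theory Defs
  imports Complex_Main
begin

definition hypergraph :: "'a set \<Rightarrow> 'a set set \<Rightarrow> bool" where
  "hypergraph V G \<longleftrightarrow> finite V \<and> (\<forall>E\<in>G. E \<subseteq> V)"

definition e_weight :: "'a set set \<Rightarrow> ('a set \<Rightarrow> real) \<Rightarrow> real" where
  "e_weight G \<nu> = (\<Sum>E\<in>G. \<nu> E)"

definition deg_weight :: "'a set set \<Rightarrow> ('a set \<Rightarrow> real) \<Rightarrow> 'a set \<Rightarrow> real" where
  "deg_weight G \<nu> L = (\<Sum>E\<in>{E\<in>G. L \<subseteq> E}. \<nu> E)"

definition Lambda_p :: "real \<Rightarrow> 'a set \<Rightarrow> 'a set set \<Rightarrow> ('a set \<Rightarrow> real) \<Rightarrow> real" where
  "Lambda_p p V G \<nu> = (\<Sum>L\<in>{L. L \<subseteq> V \<and> 2 \<le> card L}. (deg_weight G \<nu> L)\<^sup>2 / p ^ card L)"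

definition janson :: "real \<Rightarrow> real \<Rightarrow> 'a set \<Rightarrow> 'a set set \<Rightarrow> bool" where
  "janson p R V G \<longleftrightarrow> R = 0 \<or>
     (R > 0 \<and> (\<exists>\<nu>::'a set \<Rightarrow> real. (\<forall>E\<in>G. \<nu> E \<ge> 0) \<and>
        Lambda_p p V G \<nu> < (e_weight G \<nu>)\<^sup>2 / R))"

end

theory Submission
  imports Defs
begin

theorem lemma3p5:
  fixes V :: "'a set" and G :: "'a set set" and \<pi> :: "'a \<Rightarrow> 'b"
    and p R :: real
  assumes "R \<ge> 0" and "p > 0"
    and "hypergraph V G"
    and "\<forall>E\<in>G. card (\<pi> ` E) = card E"
    and "janson p R (\<pi> ` V) ((\<lambda>E. \<pi> ` E) ` G)"
  shows "janson p R V G"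
proof (cases "R = 0")
  case True then show ?thesis by (simp add: janson_def)
next
  case False
  hence Rpos: "R > 0" using assms(1) by simp
  define H where "H = (\<lambda>E. \<pi> ` E) ` G"
  obtain mu where mu0: "\<forall>F\<in>H. mu F \<ge> 0"
    and muL: "Lambda_p p (\<pi> ` V) H mu < (e_weight H mu)\<^sup>2 / R"
    using assms(5) False unfolding janson_def H_def by blast
  have finV: "finite V" and GV: "\<forall>E\<in>G. E \<subseteq> V" using assms(3) by (auto simp: hypergraph_def)
  have finG: "finite G" using finV GV
    by (meson Pow_iff finite_Pow_iff rev_finite_subset subsetI)
  have finE: "\<And>E. E \<in> G \<Longrightarrow> finite E" using finV GV finite_subset by blast
  have injE: "\<And>E. E \<in> G \<Longrightarrow> inj_on \<pi> E" using assms(4) finE inj_on_iff_eq_card by blast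
  define fib where "fib F = {E\<in>G. \<pi> ` E = F}" for F
  define \<nu> where "\<nu> E = mu (\<pi> ` E) / card (fib (\<pi> ` E))" for E
  have finfib: "finite (fib F)" for F using finG by (simp add: fib_def)
  have nu0: "\<nu> E \<ge> 0" if "E \<in> G" for E
    using mu0 that unfolding \<nu>_def H_def by auto
  have fibsum: "(\<Sum>E\<in>fib F. \<nu> E) = mu F" if "F \<in> H" for F
  proof -
    have ne: "fib F \<noteq> {}" using that by (auto simp: H_def fib_def)
    have "(\<Sum>E\<in>fib F. \<nu> E) = (\<Sum>E\<in>fib F. mu F / card (fib F))"
      by (rule sum.cong) (auto simp: \<nu>_def fib_def)
    also have "\<dots> = mu F" using ne finfib[of F] by (simp add: card_gt_0_iff)
    finally show ?thesis .
  qed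
  have eeq: "e_weight G \<nu> = e_weight H mu"
  proof -
    have "e_weight G \<nu> = (\<Sum>F\<in>H. \<Sum>E\<in>fib F. \<nu> E)"
      unfolding e_weight_def H_def fib_def using sum.image_gen[OF finG, of \<nu> "\<lambda>E. \<pi> ` E"] by simp
    also have "\<dots> = e_weight H mu" unfolding e_weight_def by (rule sum.cong) (auto simp: fibsum)
    finally show ?thesis .
  qed
  define d where "d L = deg_weight G \<nu> L" for L
  define d' where "d' M = deg_weight H mu M" for M
  have d0: "d L \<ge> 0" for L unfolding d_def deg_weight_def by (rule sum_nonneg) (auto simp: nu0)
  define S where "S = {L. L \<subseteq> V \<and> 2 \<le> card L}"
  define S' where "S' = {L\<in>S. d L \<noteq> 0}"
  define T where "T = {M. M \<subseteq> \<pi> ` V \<and> 2 \<le> card M}"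
  have finS: "finite S" using finV by (simp add: S_def)
  have finS': "finite S'" using finS by (simp add: S'_def)
  have finT: "finite T" using finV by (simp add: T_def)
  have S'E: "\<exists>E\<in>G. L \<subseteq> E" if "L \<in> S'" for L
  proof (rule ccontr)
    assume "\<not> ?thesis"
    hence "{E\<in>G. L \<subseteq> E} = {}" by auto
    hence "d L = 0" unfolding d_def deg_weight_def by (metis sum.empty)
    thus False using that by (simp add: S'_def)
  qed
  have injL: "inj_on \<pi> L" if "L \<in> S'" for L
    using S'E[OF that] injE inj_on_subset by blast
  have cardL: "card (\<pi> ` L) = card L" if "L \<in> S'" for L
    using injL[OF that] by (simp add: card_image)
  have imgT: "(\<lambda>L. \<pi> ` L) ` S' \<subseteq> T"
    using cardL by (auto simp: S'_def S_def T_def)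
  have key: "(\<Sum>L\<in>{L\<in>S'. \<pi> ` L = M}. d L) \<le> d' M" for M
  proof -
    define A where "A = {L\<in>S'. \<pi> ` L = M}"
    have finA: "finite A" using finS' by (simp add: A_def)
    have "(\<Sum>L\<in>A. d L) = (\<Sum>L\<in>A. \<Sum>E\<in>{E\<in>G. L \<subseteq> E}. \<nu> E)"
      by (simp add: d_def deg_weight_def)
    also have "\<dots> = (\<Sum>E\<in>G. \<Sum>L\<in>{L\<in>A. L \<subseteq> E}. \<nu> E)"
      using sum.swap_restrict[OF finA finG, of "\<lambda>L E. \<nu> E" "\<lambda>L E. L \<subseteq> E"] by simp
    also have "\<dots> \<le> (\<Sum>E\<in>G. if M \<subseteq> \<pi> ` E then \<nu> E else 0)"
    proof (rule sum_mono)
      fix E assume EG: "E \<in> G"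
      have sub: "{L\<in>A. L \<subseteq> E} \<subseteq> {{x\<in>E. \<pi> x \<in> M}}"
      proof
        fix L assume "L \<in> {L\<in>A. L \<subseteq> E}"
        hence LE: "L \<subseteq> E" and LM: "\<pi> ` L = M" by (auto simp: A_def)
        have "L = {x\<in>E. \<pi> x \<in> M}"
        proof
          show "L \<subseteq> {x\<in>E. \<pi> x \<in> M}" using LE LM by auto
          show "{x\<in>E. \<pi> x \<in> M} \<subseteq> L"
          proof
            fix x assume "x \<in> {x\<in>E. \<pi> x \<in> M}"
            then obtain y where "y \<in> L" "\<pi> x = \<pi> y" "x \<in> E" using LM by auto
            thus "x \<in> L" using injE[OF EG] LE by (metis inj_onD subsetD)
          qed
        qed
        thus "L \<in> {{x\<in>E. \<pi> x \<in> M}}" by simp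
      qed
      show "(\<Sum>L\<in>{L\<in>A. L \<subseteq> E}. \<nu> E) \<le> (if M \<subseteq> \<pi> ` E then \<nu> E else 0)"
      proof (cases "{L\<in>A. L \<subseteq> E} = {}")
        case True hence "{L\<in>A. L \<subseteq> E} = {}" by blast thus ?thesis using nu0[OF EG] by (simp only: sum.empty) simp
      next
        case False
        then obtain L where "L \<in> A" "L \<subseteq> E" by auto
        hence M: "M \<subseteq> \<pi> ` E" by (auto simp: A_def)
        have "{L\<in>A. L \<subseteq> E} = {{x\<in>E. \<pi> x \<in> M}}" using sub False by blast
        thus ?thesis using M by simp
      qed
    qed
    also have "\<dots> = (\<Sum>E\<in>{E\<in>G. M \<subseteq> \<pi> ` E}. \<nu> E)"
      using finG by (simp add: sum.inter_filter)
    also have "\<dots> = (\<Sum>F\<in>(\<lambda>E. \<pi> ` E) ` {E\<in>G. M \<subseteq> \<pi> ` E}. \<Sum>E\<in>{E'\<in>{E\<in>G. M \<subseteq> \<pi> ` E}. \<pi> ` E' = F}. \<nu> E)"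
      by (rule sum.image_gen) (use finG in simp)
    also have "\<dots> = (\<Sum>F\<in>{F\<in>H. M \<subseteq> F}. mu F)"
    proof -
      have im: "(\<lambda>E. \<pi> ` E) ` {E\<in>G. M \<subseteq> \<pi> ` E} = {F\<in>H. M \<subseteq> F}" by (auto simp: H_def)
      show ?thesis unfolding im
      proof (rule sum.cong)
        fix F assume F: "F \<in> {F\<in>H. M \<subseteq> F}"
        have "{E'\<in>{E\<in>G. M \<subseteq> \<pi> ` E}. \<pi> ` E' = F} = fib F" using F by (auto simp: fib_def)
        thus "(\<Sum>E\<in>{E'\<in>{E\<in>G. M \<subseteq> \<pi> ` E}. \<pi> ` E' = F}. \<nu> E) = mu F" using fibsum F by simp
      qed simp
    qed
    also have "\<dots> = d' M" by (simp add: d'_def deg_weight_def)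
    finally show ?thesis unfolding A_def .
  qed
  have d'0: "d' M \<ge> 0" for M unfolding d'_def deg_weight_def by (rule sum_nonneg) (auto simp: mu0)
  have Leq: "Lambda_p p V G \<nu> = (\<Sum>L\<in>S'. (d L)\<^sup>2 / p ^ card L)"
    unfolding Lambda_p_def d_def[symmetric] S_def[symmetric]
    by (rule sum.mono_neutral_right[OF finS]) (auto simp: S'_def)
  also have "\<dots> = (\<Sum>M\<in>(\<lambda>L. \<pi> ` L) ` S'. \<Sum>L\<in>{L\<in>S'. \<pi> ` L = M}. (d L)\<^sup>2 / p ^ card L)"
    by (rule sum.image_gen[OF finS'])
  also have "\<dots> \<le> (\<Sum>M\<in>(\<lambda>L. \<pi> ` L) ` S'. (d' M)\<^sup>2 / p ^ card M)"
  proof (rule sum_mono)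
    fix M assume "M \<in> (\<lambda>L. \<pi> ` L) ` S'"
    define A where "A = {L\<in>S'. \<pi> ` L = M}"
    define D where "D = (\<Sum>L\<in>A. d L)"
    have finA: "finite A" using finS' by (simp add: A_def)
    have pp: "p ^ card M > 0" using assms(2) by simp
    have "(\<Sum>L\<in>A. (d L)\<^sup>2 / p ^ card L) = (\<Sum>L\<in>A. (d L)\<^sup>2) / p ^ card M"
      unfolding sum_divide_distrib by (rule sum.cong) (auto simp: A_def cardL)
    also have "\<dots> \<le> D\<^sup>2 / p ^ card M"
    proof (rule divide_right_mono)
      have "(\<Sum>L\<in>A. (d L)\<^sup>2) \<le> (\<Sum>L\<in>A. d L * D)"
      proof (rule sum_mono)
        fix L assume "L \<in> A"
        hence "d L \<le> D" unfolding D_def using finA d0 by (intro member_le_sum) auto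
        thus "(d L)\<^sup>2 \<le> d L * D" using d0[of L] by (simp add: power2_eq_square mult_left_mono)
      qed
      also have "\<dots> = D\<^sup>2" by (simp add: D_def power2_eq_square sum_distrib_right)
      finally show "(\<Sum>L\<in>A. (d L)\<^sup>2) \<le> D\<^sup>2" .
    qed (use pp in simp)
    also have "\<dots> \<le> (d' M)\<^sup>2 / p ^ card M"
    proof (rule divide_right_mono)
      have "D \<ge> 0" unfolding D_def by (rule sum_nonneg) (use d0 in auto)
      moreover have "D \<le> d' M" using key[of M] by (simp add: D_def A_def)
      ultimately show "D\<^sup>2 \<le> (d' M)\<^sup>2" by (simp add: power_mono)
    qed (use pp in simp)
    finally show "(\<Sum>L\<in>{L\<in>S'. \<pi> ` L = M}. (d L)\<^sup>2 / p ^ card L) \<le> (d' M)\<^sup>2 / p ^ card M"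
      unfolding A_def .
  qed
  also have "\<dots> \<le> (\<Sum>M\<in>T. (d' M)\<^sup>2 / p ^ card M)"
    by (rule sum_mono2[OF finT imgT]) (use assms(2) in simp)
  also have "\<dots> = Lambda_p p (\<pi> ` V) H mu"
    by (simp add: Lambda_p_def T_def d'_def)
  also have "\<dots> < (e_weight G \<nu>)\<^sup>2 / R" using muL eeq by simp
  finally show ?thesis unfolding janson_def using Rpos nu0 by blast
qed

end
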